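(* Let $\alpha\ge1$ and for $n=0,1,\dots$ let $$z_n(x)=L_{1,1+n}^{II,(\alpha)}(x)\frac{e^{-x/2}}{S(x)}=e^{-x/2}\Bigl(-xL_{n-1}^{(\alpha+2)}(x)+\alpha\Bigl(1+\frac{1}{x+\alpha}\Bigr)L_n^{(\alpha+1)}(x)\Bigr),\qquad x\ge0,$$ where $S(x)=-x-\alpha$, and let $c_n$ be the constant with $c_nz_n(0)=1$. Then $\|c_nz_n\|_{\infty,[0,\infty)}=c_nz_n(0)=1$ for all $n=0,1,\dots$.
   Context: $L_n^{(\beta)}$ is the classical Laguerre polynomial, with $L_{-1}^{(\beta)}\equiv0$. $L_{1,1+n}^{II,(\alpha)}$ is the type II exceptional Laguerre polynomial of codimension $1$, with $S(x)=L_1^{(-\alpha-1)}(x)=-x-\alpha$; the displayed explicit expression is taken as the definition of $z_n$. *)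

theory Defs
  imports Complex_Main
begin

definition laguerre :: "nat \<Rightarrow> real \<Rightarrow> real \<Rightarrow> real" where
  "laguerre n b x = (\<Sum>k\<le>n. ((real n + b) gchoose (n - k)) * (- x) ^ k / fact k)"

definition laguerre_pred :: "nat \<Rightarrow> real \<Rightarrow> real \<Rightarrow> real" where
  "laguerre_pred n b x = (if n = 0 then 0 else laguerre (n - 1) b x)"

definition zfun :: "real \<Rightarrow> nat \<Rightarrow> real \<Rightarrow> real" where
  "zfun a n x = exp (- x / 2) *
     (- x * laguerre_pred n (a + 2) x + a * (1 + 1 / (x + a)) * laguerre n (a + 1) x)"

end

theory Submission
  imports Defs "HOL-Computational_Algebra.Formal_Power_Series"
begin

definition lcoef :: "nat \<Rightarrow> real \<Rightarrow> nat \<Rightarrow> real" where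
  "lcoef n b k = (if k \<le> n then ((real n + b) gchoose (n - k)) / fact k else 0)"

lemma lag_ext:
  assumes "n \<le> N"
  shows "laguerre n b x = (\<Sum>k\<le>N. lcoef n b k * (- x) ^ k)"
proof -
  have "(\<Sum>k\<le>N. lcoef n b k * (- x) ^ k) = (\<Sum>k\<le>n. lcoef n b k * (- x) ^ k)"
    by (rule sum.mono_neutral_right) (use assms in \<open>auto simp: lcoef_def\<close>)
  also have "\<dots> = laguerre n b x"
    unfolding laguerre_def lcoef_def by (intro sum.cong) auto
  finally show ?thesis by simp
qed

lemma lag_R1: "laguerre (Suc n) b x = laguerre (Suc n) (b + 1) x - laguerre n (b + 1) x"
proof -
  have "laguerre (Suc n) (b + 1) x - laguerre n (b + 1) x =
     (\<Sum>k\<le>Suc n. (lcoef (Suc n) (b+1) k - lcoef n (b+1) k) * (- x) ^ k)"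
    by (simp add: lag_ext[of "Suc n" "Suc n"] lag_ext[of n "Suc n"] sum_subtractf algebra_simps)
  also have "\<dots> = (\<Sum>k\<le>Suc n. lcoef (Suc n) b k * (- x) ^ k)"
  proof (intro sum.cong refl)
    fix k assume k: "k \<in> {..Suc n}"
    show "(lcoef (Suc n) (b+1) k - lcoef n (b+1) k) * (- x) ^ k = lcoef (Suc n) b k * (- x) ^ k"
    proof (cases "k = Suc n")
      case True then show ?thesis by (simp add: lcoef_def)
    next
      case False
      then have kn: "k \<le> n" using k by auto
      have e: "Suc n - k = Suc (n - k)" using kn by simp
      have "(real (Suc n) + (b + 1)) gchoose Suc (n - k) =
            ((real (Suc n) + b) gchoose (n - k)) + ((real (Suc n) + b) gchoose Suc (n - k))"
        using gbinomial_Suc_Suc[of "real (Suc n) + b" "n - k"] by (simp add: algebra_simps)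
      moreover have "real (Suc n) + b = real n + (b + 1)" by simp
      ultimately show ?thesis using kn e by (simp add: lcoef_def field_simps)
    qed
  qed
  also have "\<dots> = laguerre (Suc n) b x" by (simp add: lag_ext[of "Suc n" "Suc n"])
  finally show ?thesis by simp
qed

lemma lag_R2: "x * laguerre n (b + 1) x =
  (real n + b + 1) * laguerre n b x - (real n + 1) * laguerre (Suc n) b x"
proof -
  have "(real n + b + 1) * laguerre n b x - (real n + 1) * laguerre (Suc n) b x =
     (\<Sum>k\<le>Suc n. ((real n + b + 1) * lcoef n b k - (real n + 1) * lcoef (Suc n) b k) * (- x) ^ k)"
    by (simp add: lag_ext[of "n" "Suc n"] lag_ext[of "Suc n" "Suc n"] sum_subtractf sum_distrib_left
        algebra_simps)
  also have "\<dots> = ((real n + b + 1) * lcoef n b 0 - (real n + 1) * lcoef (Suc n) b 0) +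
     (\<Sum>k\<le>n. ((real n + b + 1) * lcoef n b (Suc k) - (real n + 1) * lcoef (Suc n) b (Suc k)) * (- x) ^ Suc k)"
    by (subst sum.atMost_Suc_shift) simp
  also have "((real n + b + 1) * lcoef n b 0 - (real n + 1) * lcoef (Suc n) b 0) = 0"
  proof -
    have "of_nat (Suc n) * ((real n + b + 1) gchoose Suc n) = (real n + b + 1) * ((real n + b + 1 - 1) gchoose n)"
      by (rule gbinomial_absorption)
    then show ?thesis by (simp add: lcoef_def algebra_simps)
  qed
  also have "(\<Sum>k\<le>n. ((real n + b + 1) * lcoef n b (Suc k) - (real n + 1) * lcoef (Suc n) b (Suc k)) * (- x) ^ Suc k)
      = (\<Sum>k\<le>n. (- lcoef n (b + 1) k) * (- x) ^ Suc k)"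
  proof (intro sum.cong refl)
    fix k assume k: "k \<in> {..n}"
    show "((real n + b + 1) * lcoef n b (Suc k) - (real n + 1) * lcoef (Suc n) b (Suc k)) * (- x) ^ Suc k
       = (- lcoef n (b + 1) k) * (- x) ^ Suc k"
    proof (cases "k = n")
      case True
      have "fact n + fact n * real n = (fact n * (real n + 1) :: real)" by (simp add: algebra_simps)
      then show ?thesis using True by (simp add: lcoef_def fact_Suc divide_simps) (simp add: algebra_simps)
    next
      case False
      then have kn: "Suc k \<le> n" using k by auto
      define m where "m = n - Suc k"
      have e1: "n - k = Suc m" and e2: "Suc n - Suc k = Suc m" using kn by (auto simp: m_def)
      have ab: "of_nat (Suc m) * ((real n + b + 1) gchoose Suc m) = (real n + b + 1) * ((real n + b + 1 - 1) gchoose m)"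
        by (rule gbinomial_absorption)
      have km: "real n = real k + real m + 1" using kn by (simp add: m_def)
      have "((real n + b + 1) * ((real n + b) gchoose m) / fact (Suc k) - (real n + 1) * ((real (Suc n) + b) gchoose Suc m) / fact (Suc k))
           = - ((real n + (b + 1)) gchoose Suc m) / fact k"
      proof -
        have "(real n + b + 1) * ((real n + b) gchoose m) = real (Suc m) * ((real n + b + 1) gchoose Suc m)"
          using ab by simp
        then have "(real n + b + 1) * ((real n + b) gchoose m) - (real n + 1) * ((real (Suc n) + b) gchoose Suc m)
            = - real (Suc k) * ((real n + (b + 1)) gchoose Suc m)"
          using km by (simp add: algebra_simps)
        then have "((real n + b + 1) * ((real n + b) gchoose m) - (real n + 1) * ((real (Suc n) + b) gchoose Suc m)) / fact (Suc k)
            = - real (Suc k) * ((real n + (b + 1)) gchoose Suc m) / (real (Suc k) * fact k)"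
          by (simp only: fact_Suc of_nat_mult)
        also have "\<dots> = - ((real n + (b + 1)) gchoose Suc m) / fact k"
          by (simp add: divide_simps) (simp add: algebra_simps)
        finally show ?thesis by (simp add: diff_divide_distrib)
      qed
      then show ?thesis using kn e1 e2 by (simp add: lcoef_def m_def[symmetric])
    qed
  qed
  also have "\<dots> = x * laguerre n (b + 1) x"
    by (simp add: lag_ext[of n n] sum_distrib_left algebra_simps)
  finally show ?thesis by simp
qed

lemma neg_up: "((of_nat j - a - 1) gchoose j) = (-1) ^ j * (a gchoose j :: real)"
proof -
  have "(a gchoose j) = (-1) ^ j * ((of_nat j - a - 1) gchoose j)" by (rule gbinomial_negated_upper)
  then have "(-1) ^ j * (a gchoose j) = ((-1) ^ j * (-1) ^ j) * ((of_nat j - a - 1) gchoose j)" by simp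
  also have "(-1) ^ j * (-1) ^ j = (1::real)" by (simp add: power_mult_distrib[symmetric])
  finally show ?thesis by simp
qed

lemma vand_aux:
  "(\<Sum>j=0..N. ((real j + b - 1) gchoose j) * ((real (N - j) + real k) gchoose (N - j)))
     = (real N + real k + b) gchoose N"
proof -
  have "(\<Sum>j=0..N. ((real j + b - 1) gchoose j) * ((real (N - j) + real k) gchoose (N - j)))
      = (\<Sum>j=0..N. (-1) ^ N * (((- b) gchoose j) * ((- real k - 1) gchoose (N - j))))"
  proof (intro sum.cong refl)
    fix j assume j: "j \<in> {0..N}"
    have 1: "((real j + b - 1) gchoose j) = (-1) ^ j * ((- b) gchoose j)"
      using neg_up[of j "- b"] by simp
    have 2: "((real (N - j) + real k) gchoose (N - j)) = (-1) ^ (N - j) * ((- real k - 1) gchoose (N - j))"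
      using neg_up[of "N - j" "- real k - 1"] by simp
    have 3: "(-1) ^ j * (-1) ^ (N - j) = ((-1) ^ N :: real)"
      using j by (simp add: power_add[symmetric])
    show "((real j + b - 1) gchoose j) * ((real (N - j) + real k) gchoose (N - j)) =
         (-1) ^ N * (((- b) gchoose j) * ((- real k - 1) gchoose (N - j)))"
      unfolding 1 2 using 3 by (simp add: algebra_simps)
  qed
  also have "\<dots> = (-1) ^ N * ((- b + (- real k - 1)) gchoose N)"
    by (simp add: sum_distrib_left[symmetric] gbinomial_Vandermonde)
  also have "\<dots> = (real N + real k + b) gchoose N"
    using neg_up[of N "real N + real k + b"] by (simp add: algebra_simps)
  finally show ?thesis .
qed

lemma lag_conn: "laguerre n b x = (\<Sum>j\<le>n. ((real j + b - 1) gchoose j) * laguerre (n - j) 0 x)"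
proof -
  have "(\<Sum>j\<le>n. ((real j + b - 1) gchoose j) * laguerre (n - j) 0 x)
     = (\<Sum>j\<le>n. \<Sum>k\<le>n. ((real j + b - 1) gchoose j) * lcoef (n - j) 0 k * (- x) ^ k)"
    by (simp add: lag_ext[of _ n] sum_distrib_left algebra_simps)
  also have "\<dots> = (\<Sum>k\<le>n. (\<Sum>j\<le>n. ((real j + b - 1) gchoose j) * lcoef (n - j) 0 k) * (- x) ^ k)"
    by (subst sum.swap) (simp add: sum_distrib_right)
  also have "\<dots> = (\<Sum>k\<le>n. lcoef n b k * (- x) ^ k)"
  proof (intro sum.cong refl)
    fix k assume k: "k \<in> {..n}"
    define N where "N = n - k"
    have "(\<Sum>j\<le>n. ((real j + b - 1) gchoose j) * lcoef (n - j) 0 k)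
        = (\<Sum>j=0..N. ((real j + b - 1) gchoose j) * lcoef (n - j) 0 k)"
      by (rule sum.mono_neutral_right) (auto simp: N_def lcoef_def)
    also have "\<dots> = (\<Sum>j=0..N. ((real j + b - 1) gchoose j) * ((real (N - j) + real k) gchoose (N - j))) / fact k"
      unfolding sum_divide_distrib
    proof (intro sum.cong refl)
      fix j assume j: "j \<in> {0..N}"
      then have "k \<le> n - j" "n - j - k = N - j" "real (n - j) = real (N - j) + real k"
        using k by (auto simp: N_def)
      then show "((real j + b - 1) gchoose j) * lcoef (n - j) 0 k =
           ((real j + b - 1) gchoose j) * ((real (N - j) + real k) gchoose (N - j)) / fact k"
        by (simp add: lcoef_def)
    qed
    also have "\<dots> = ((real N + real k + b) gchoose N) / fact k" by (simp only: vand_aux)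
    also have "\<dots> = lcoef n b k"
      using k by (simp add: lcoef_def N_def)
    finally show "(\<Sum>j\<le>n. ((real j + b - 1) gchoose j) * lcoef (n - j) 0 k) * (- x) ^ k = lcoef n b k * (- x) ^ k"
      by simp
  qed
  also have "\<dots> = laguerre n b x" by (simp add: lag_ext[of n n])
  finally show ?thesis by simp
qed


definition cc :: "nat \<Rightarrow> nat \<Rightarrow> nat \<Rightarrow> real" where
  "cc n m k = (if k \<le> n \<and> k \<le> m then (-1) ^ (n - k) / (fact (m - k) * fact (n - k) * fact k) else 0)"

lemma cc_rec_a: "cc (Suc (k+v)) (Suc (k+u)) k * real (u + v + 2) = cc (Suc (k+v)) (Suc (k+u)) (Suc k)
  + cc (Suc (k+v)) (k+u) k - real (k+u+2) * cc (Suc(k+v)) (Suc (Suc (k+u))) (Suc k)"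
proof -
  define sg where "sg = ((-1::real) ^ (Suc v))"
  have c1: "cc (Suc (k+v)) (Suc (k+u)) k = sg / ((real u + 1) * fact u * ((real v + 1) * fact v) * fact k)"
    by (simp add: cc_def Suc_diff_le fact_Suc sg_def algebra_simps)
  have c2: "cc (Suc (k+v)) (Suc (k+u)) (Suc k) = - sg / (fact u * fact v * ((real k + 1) * fact k))"
    by (simp add: cc_def Suc_diff_le fact_Suc sg_def algebra_simps)
  have c3: "cc (Suc (k+v)) (k+u) k = sg / (fact u * ((real v + 1) * fact v) * fact k)"
    by (simp add: cc_def Suc_diff_le fact_Suc sg_def algebra_simps)
  have c4: "cc (Suc(k+v)) (Suc (Suc (k+u))) (Suc k) = - sg / ((real u + 1) * fact u * fact v * ((real k + 1) * fact k))"
    by (simp add: cc_def Suc_diff_le fact_Suc sg_def algebra_simps)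
  have gen: "sg / (U * A * (V * B) * C) * (U + V) =
          - sg / (A * B * (K * C)) + sg / (A * (V * B) * C)
          - (K + U) * (- sg / (U * A * B * (K * C)))"
        if "A > 0" "B > 0" "C > 0" "U > 0" "V > 0" "K > 0" for A B C U V K :: real
    using that by (simp add: field_simps)
  have e1: "real (u + v + 2) = (real u + 1) + (real v + 1)" by simp
  have e2: "real (k + u + 2) = (real k + 1) + (real u + 1)" by simp
  show ?thesis unfolding c1 c2 c3 c4 e1 e2 by (rule gen) auto
qed

lemma cc_rec_b: "cc k (Suc (k+u)) k * real (Suc (k + u) + k - 2 * k) = cc k (Suc (k+u)) (Suc k)
  + cc k (k+u) k - real (Suc (Suc (k+u))) * cc k (Suc (Suc (k+u))) (Suc k)"
proof -
  have e: "real (Suc (k + u) + k - 2 * k) = real u + 1" by simp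
  have c1: "cc k (Suc (k+u)) k = 1 / ((real u + 1) * fact u * fact k)"
    by (simp add: cc_def Suc_diff_le fact_Suc algebra_simps)
  have c3: "cc k (k+u) k = 1 / (fact u * fact k)"
    by (simp add: cc_def)
  have z: "cc k (Suc (k+u)) (Suc k) = 0" "cc k (Suc (Suc (k+u))) (Suc k) = 0" by (simp_all add: cc_def)
  have gen: "1 / (U * A * C) * U = 1 / (A * C)" if "A > 0" "C > 0" "U > 0" for A C U :: real
    using that by (simp add: field_simps)
  show ?thesis unfolding e c1 c3 z by (simp add: gen)
qed

lemma cc_rec_c: "cc (Suc (Suc (p + v))) (Suc p) (Suc p) * real (Suc p + Suc (Suc (p + v)) - 2 * Suc p) =
  cc (Suc (Suc (p + v))) (Suc p) (Suc (Suc p)) + cc (Suc (Suc (p + v))) p (Suc p)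
  - real (Suc (Suc p)) * cc (Suc (Suc (p + v))) (Suc (Suc p)) (Suc (Suc p))"
proof -
  define sg where "sg = ((-1::real) ^ v)"
  have e: "real (Suc p + Suc (Suc (p + v)) - 2 * Suc p) = real v + 1" by simp
  have e2: "real (Suc (Suc p)) = real p + 2" by simp
  have c1: "cc (Suc (Suc (p + v))) (Suc p) (Suc p) = - sg / ((real v + 1) * fact v * ((real p + 1) * fact p))"
    by (simp add: cc_def sg_def Suc_diff_le fact_Suc algebra_simps)
  have c4: "cc (Suc (Suc (p + v))) (Suc (Suc p)) (Suc (Suc p)) = sg / (fact v * ((real p + 2) * ((real p + 1) * fact p)))"
    by (simp add: cc_def sg_def Suc_diff_le fact_Suc algebra_simps)
  have z: "cc (Suc (Suc (p + v))) (Suc p) (Suc (Suc p)) = 0" "cc (Suc (Suc (p + v))) p (Suc p) = 0"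
    by (simp_all add: cc_def)
  have gen: "- sg / (V * B * (P1 * A)) * V = 0 + 0 - P2 * (sg / (B * (P2 * (P1 * A))))"
    if "A > 0" "B > 0" "V > 0" "P1 > 0" "P2 > 0" for A B V P1 P2 :: real
    using that by (simp add: field_simps)
  show ?thesis unfolding e e2 c1 c4 z by (rule gen) auto
qed

lemma cc_rec:
  "cc n m k * real (m + n - 2 * k) =
     cc n m (Suc k) + (if m = 0 then 0 else cc n (m - 1) k) - real (Suc m) * cc n (Suc m) (Suc k)"
proof (cases "k \<le> n")
  case False
  then show ?thesis by (simp add: cc_def)
next
  case kn: True
  show ?thesis
  proof (cases m)
    case 0
    show ?thesis
    proof (cases k)
      case 0
      show ?thesis
      proof (cases n)
        case 0 then show ?thesis using \<open>m = 0\<close> \<open>k = 0\<close> by (simp add: cc_def)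
      next
        case (Suc q)
        have "(-1::real) ^ q = - ((-1) ^ Suc q)" by simp
        have "fact q + fact q * real q = fact q * (1 + real q)" by (simp add: algebra_simps)
        then have "fact q + fact q * real q \<noteq> 0" by simp
        then show ?thesis using \<open>m = 0\<close> \<open>k = 0\<close> Suc by (simp add: cc_def fact_Suc divide_simps)
      qed
    next
      case (Suc k') then show ?thesis using \<open>m = 0\<close> by (simp add: cc_def)
    qed
  next
    case (Suc p)
    have s1: "(-1::real) ^ (n - Suc k) = - ((-1) ^ (n - k))" if "Suc k \<le> n"
    proof -
      have "n - k = Suc (n - Suc k)" using that by simp
      then show ?thesis by simp
    qed
    consider (a) "k \<le> p" "Suc k \<le> n" | (b) "k \<le> p" "k = n" | (c) "k = Suc p" | (d) "k > Suc p"
      using kn by linarith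
    then show ?thesis
    proof cases
      case a
      define u where "u = p - k"
      define v where "v = n - Suc k"
      have u: "p = k + u" using a by (simp add: u_def)
      have v: "n = Suc (k + v)" using a by (simp add: v_def)
      have m: "m = Suc (k + u)" using Suc u by simp
      have ee': "Suc (k + u) + Suc (k + v) - 2 * k = u + v + 2" by simp
      have r2: "real (Suc (Suc (k + u))) = real (k + u + 2)" by simp
      show ?thesis unfolding m v ee' r2 using cc_rec_a[of k v u] by (simp only: nat.distinct if_False diff_Suc_1)
    next
      case b
      define u where "u = p - k"
      have u: "p = k + u" using b by (simp add: u_def)
      have m: "m = Suc (k + u)" using Suc u by simp
      show ?thesis unfolding m b(2)[symmetric] using cc_rec_b[of k u] by (simp only: nat.distinct if_False diff_Suc_1)
    next
      case c
      show ?thesis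
      proof (cases "Suc (Suc p) \<le> n")
        case True
        define v where "v = n - Suc (Suc p)"
        have v: "n = Suc (Suc (p + v))" using True by (simp add: v_def)
        show ?thesis unfolding Suc v c using cc_rec_c[of p v] by (simp only: nat.distinct if_False diff_Suc_1)
      next
        case False
        then show ?thesis using c Suc kn by (simp add: cc_def)
      qed
    next
      case d
      then show ?thesis using Suc by (simp add: cc_def)
    qed
  qed
qed


definition PP :: "nat \<Rightarrow> nat \<Rightarrow> real \<Rightarrow> real" where
  "PP n m r = (\<Sum>k\<le>n. cc n m k * r ^ (m + n - 2 * k))"

definition DPP :: "nat \<Rightarrow> nat \<Rightarrow> real \<Rightarrow> real" where
  "DPP n m r = (\<Sum>k\<le>n. cc n m k * (real (m + n - 2 * k) * r ^ (m + n - 2 * k - Suc 0)))"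

lemma PP_deriv: "(PP n m has_field_derivative DPP n m r) (at r)"
  unfolding PP_def DPP_def
  by (intro DERIV_sum DERIV_cmult DERIV_pow)

lemma cc_zero: "\<not> (k \<le> n \<and> k \<le> m) \<Longrightarrow> cc n m k = 0"
  by (simp add: cc_def)

lemma cc0: "cc n m 0 = real (Suc m) * cc n (Suc m) 0"
  by (simp add: cc_def fact_Suc)

lemma PP_rec:
  "DPP n m r = r * PP n m r + (if m = 0 then 0 else PP n (m - 1) r) - real (Suc m) * PP n (Suc m) r"
proof -
  define E where "E j = m + n + 1 - 2 * j" for j
  have h1: "r * PP n m r = (\<Sum>j\<le>Suc n. cc n m j * r ^ E j)"
  proof -
    have "r * PP n m r = (\<Sum>j\<le>n. cc n m j * r ^ E j)"
      unfolding PP_def sum_distrib_left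
    proof (intro sum.cong refl)
      fix k assume "k \<in> {..n}"
      show "r * (cc n m k * r ^ (m + n - 2 * k)) = cc n m k * r ^ E k"
      proof (cases "k \<le> n \<and> k \<le> m")
        case True
        then have "E k = Suc (m + n - 2 * k)" unfolding E_def by arith
        then show ?thesis by simp
      qed (simp add: cc_zero)
    qed
    also have "\<dots> = (\<Sum>j\<le>Suc n. cc n m j * r ^ E j)" by (simp add: cc_zero)
    finally show ?thesis .
  qed
  have h2: "real (Suc m) * PP n (Suc m) r = (\<Sum>j\<le>Suc n. real (Suc m) * cc n (Suc m) j * r ^ E j)"
  proof -
    have "real (Suc m) * PP n (Suc m) r = (\<Sum>j\<le>n. real (Suc m) * cc n (Suc m) j * r ^ E j)"
      unfolding PP_def sum_distrib_left by (intro sum.cong refl) (simp add: E_def)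
    also have "\<dots> = (\<Sum>j\<le>Suc n. real (Suc m) * cc n (Suc m) j * r ^ E j)" by (simp add: cc_zero)
    finally show ?thesis .
  qed
  have h3: "DPP n m r = (\<Sum>j\<le>Suc n. (if j = 0 then 0 else cc n m (j - 1) * real (m + n - 2 * (j - 1))) * r ^ E j)"
  proof -
    have "(\<Sum>j\<le>Suc n. (if j = 0 then 0 else cc n m (j - 1) * real (m + n - 2 * (j - 1))) * r ^ E j)
        = (\<Sum>k\<le>n. cc n m k * real (m + n - 2 * k) * r ^ E (Suc k))"
      by (subst sum.atMost_Suc_shift) simp
    also have "\<dots> = DPP n m r"
      unfolding DPP_def by (intro sum.cong refl) (simp add: E_def)
    finally show ?thesis by simp
  qed
  have h4: "(if m = 0 then 0 else PP n (m - 1) r) =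
      (\<Sum>j\<le>Suc n. (if j = 0 \<or> m = 0 then 0 else cc n (m - 1) (j - 1)) * r ^ E j)"
  proof (cases "m = 0")
    case True then show ?thesis by simp
  next
    case False
    have "(\<Sum>j\<le>Suc n. (if j = 0 \<or> m = 0 then 0 else cc n (m - 1) (j - 1)) * r ^ E j)
        = (\<Sum>k\<le>n. cc n (m - 1) k * r ^ E (Suc k))"
      using False by (subst sum.atMost_Suc_shift) simp
    also have "\<dots> = PP n (m - 1) r"
      unfolding PP_def using False by (intro sum.cong refl) (simp add: E_def)
    finally show ?thesis using False by simp
  qed
  have "r * PP n m r + (if m = 0 then 0 else PP n (m - 1) r) - real (Suc m) * PP n (Suc m) r
      = (\<Sum>j\<le>Suc n. (cc n m j + (if j = 0 \<or> m = 0 then 0 else cc n (m - 1) (j - 1))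
            - real (Suc m) * cc n (Suc m) j) * r ^ E j)"
    unfolding h1 h2 h4 by (simp add: sum.distrib sum_subtractf algebra_simps)
  also have "\<dots> = DPP n m r"
    unfolding h3
  proof (intro sum.cong refl)
    fix j assume "j \<in> {..Suc n}"
    show "(cc n m j + (if j = 0 \<or> m = 0 then 0 else cc n (m - 1) (j - 1)) - real (Suc m) * cc n (Suc m) j) * r ^ E j =
         (if j = 0 then 0 else cc n m (j - 1) * real (m + n - 2 * (j - 1))) * r ^ E j"
    proof (cases j)
      case 0 then show ?thesis using cc0[of n m] by simp
    next
      case (Suc k)
      then show ?thesis using cc_rec[of n m k] by auto
    qed
  qed
  finally show ?thesis by simp
qed


definition VV :: "nat \<Rightarrow> nat \<Rightarrow> real \<Rightarrow> real" where
  "VV n m r = exp (- (r ^ 2)) * fact m * (PP n m r) ^ 2"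

definition TT :: "nat \<Rightarrow> nat \<Rightarrow> real \<Rightarrow> real" where
  "TT n m r = (if m = 0 then 0 else fact m * PP n m r * PP n (m - 1) r)"

definition SS :: "nat \<Rightarrow> nat \<Rightarrow> real \<Rightarrow> real" where
  "SS n M r = (\<Sum>m\<le>M. VV n m r)"

lemma VV_deriv: "((VV n m) has_field_derivative (2 * exp (- (r ^ 2)) * (TT n m r - TT n (Suc m) r))) (at r)"
proof -
  have d: "((VV n m) has_field_derivative
      (exp (- (r ^ 2)) * (- (2 * r)) * fact m * (PP n m r) ^ 2 + exp (- (r ^ 2)) * fact m * (2 * PP n m r * DPP n m r))) (at r)"
    unfolding VV_def
    by (auto intro!: derivative_eq_intros PP_deriv simp: power2_eq_square algebra_simps)
  have "exp (- (r ^ 2)) * (- (2 * r)) * fact m * (PP n m r) ^ 2 + exp (- (r ^ 2)) * fact m * (2 * PP n m r * DPP n m r)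
      = 2 * exp (- (r ^ 2)) * (fact m * PP n m r * (DPP n m r - r * PP n m r))"
    by (simp add: power2_eq_square algebra_simps)
  also have "fact m * PP n m r * (DPP n m r - r * PP n m r) = TT n m r - TT n (Suc m) r"
    unfolding PP_rec[of n m r] TT_def by (simp add: fact_Suc algebra_simps)
  finally show ?thesis using d by simp
qed

lemma SS_deriv: "((SS n M) has_field_derivative (- 2 * exp (- (r ^ 2)) * TT n (Suc M) r)) (at r)"
proof -
  have "((\<lambda>r. \<Sum>m\<le>M. VV n m r) has_field_derivative (\<Sum>m\<le>M. 2 * exp (- (r ^ 2)) * (TT n m r - TT n (Suc m) r))) (at r)"
    by (intro DERIV_sum VV_deriv)
  moreover have "(\<Sum>m\<le>M. 2 * exp (- (r ^ 2)) * (TT n m r - TT n (Suc m) r)) = - 2 * exp (- (r ^ 2)) * TT n (Suc M) r"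
  proof -
    have tel: "(\<Sum>m\<le>M. TT n m r - TT n (Suc m) r) = - TT n (Suc M) r"
      using sum_telescope[of "\<lambda>m. TT n m r" M] by (simp add: TT_def)
    show ?thesis by (simp only: sum_distrib_left[symmetric] tel)
  qed
  ultimately show ?thesis unfolding SS_def[abs_def] by simp
qed

lemma PP_at0: "PP n m 0 = (if m = n then 1 / fact n else 0)"
proof -
  have "PP n m 0 = (\<Sum>k\<le>n. (if m = n \<and> k = n then 1 / fact n else 0))"
    unfolding PP_def
  proof (intro sum.cong refl)
    fix k assume k: "k \<in> {..n}"
    show "cc n m k * 0 ^ (m + n - 2 * k) = (if m = n \<and> k = n then 1 / fact n else 0)"
    proof (cases "k \<le> n \<and> k \<le> m")
      case True
      show ?thesis
      proof (cases "m = n \<and> k = n")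
        case True then show ?thesis by (simp add: cc_def)
      next
        case False
        then have "m + n - 2 * k \<noteq> 0" using \<open>k \<le> n \<and> k \<le> m\<close> by auto
        then show ?thesis using False by simp
      qed
    qed (auto simp: cc_zero)
  qed
  also have "\<dots> = (if m = n then 1 / fact n else 0)"
    by (cases "m = n") (simp_all add: sum.delta)
  finally show ?thesis .
qed

lemma SS_at0: "n \<le> M \<Longrightarrow> SS n M 0 = 1 / fact n"
proof -
  assume "n \<le> M"
  have "SS n M 0 = (\<Sum>m\<le>M. (if m = n then 1 / fact n else 0))"
    unfolding SS_def VV_def PP_at0 by (intro sum.cong refl) (simp add: power2_eq_square)
  also have "\<dots> = 1 / fact n" using \<open>n \<le> M\<close> by (simp add: sum.delta)
  finally show ?thesis .
qed


lemma cc_abs_le: assumes "n \<le> m" shows "\<bar>cc n m k\<bar> \<le> 1 / fact (m - n)"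
proof (cases "k \<le> n \<and> k \<le> m")
  case True
  have "\<bar>cc n m k\<bar> = 1 / (fact (m - k) * fact (n - k) * fact k)"
    using True by (simp add: cc_def abs_mult)
  also have "\<dots> \<le> 1 / fact (m - k)"
  proof -
    have "fact (m - k) \<le> (fact (m - k) * fact (n - k) * fact k :: real)"
    proof -
      have a: "(1::real) \<le> fact (n - k)" "(1::real) \<le> fact k" by (rule fact_ge_1)+
      have "(1::real) * 1 \<le> fact (n - k) * fact k" by (rule mult_mono) (use a in auto)
      then have "fact (m - k) * 1 \<le> fact (m - k) * (fact (n - k) * fact k :: real)"
        by (intro mult_left_mono) auto
      then show ?thesis by (simp add: mult.assoc)
    qed
    then show ?thesis by (intro divide_left_mono) (auto simp: fact_gt_zero)
  qed
  also have "\<dots> \<le> 1 / fact (m - n)"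
    using True assms by (intro divide_left_mono fact_mono) auto
  finally show ?thesis .
qed (simp add: cc_zero)

lemma PP_bound:
  assumes "n \<le> m" "0 \<le> t" "t \<le> R" "1 \<le> R"
  shows "\<bar>PP n m t\<bar> \<le> real (Suc n) * R ^ (m + n) / fact (m - n)"
proof -
  have "\<bar>PP n m t\<bar> \<le> (\<Sum>k\<le>n. \<bar>cc n m k * t ^ (m + n - 2 * k)\<bar>)"
    unfolding PP_def by (rule sum_abs)
  also have "\<dots> \<le> (\<Sum>k\<le>n. 1 / fact (m - n) * R ^ (m + n))"
  proof (intro sum_mono)
    fix k assume "k \<in> {..n}"
    have "\<bar>t ^ (m + n - 2 * k)\<bar> \<le> R ^ (m + n - 2 * k)"
      using assms by (simp add: power_mono)
    also have "\<dots> \<le> R ^ (m + n)" using assms by (intro power_increasing) auto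
    finally have "\<bar>t ^ (m + n - 2 * k)\<bar> \<le> R ^ (m + n)" .
    then show "\<bar>cc n m k * t ^ (m + n - 2 * k)\<bar> \<le> 1 / fact (m - n) * R ^ (m + n)"
      unfolding abs_mult using cc_abs_le[OF assms(1), of k]
      by (intro mult_mono) auto
  qed
  also have "\<dots> = real (Suc n) * R ^ (m + n) / fact (m - n)" by simp
  finally show ?thesis .
qed

lemma fact_shift_le: "fact (j + 1 + n) \<le> fact (j + 1) * real (j + 1 + n) ^ n"
proof (induction n)
  case 0 then show ?case by simp
next
  case (Suc n)
  have "fact (j + 1 + Suc n) = real (j + 1 + Suc n) * fact (j + 1 + n)"
    by (simp add: fact_Suc)
  also have "\<dots> \<le> real (j + 1 + Suc n) * (fact (j + 1) * real (j + 1 + n) ^ n)"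
    using Suc by (intro mult_left_mono) auto
  also have "\<dots> \<le> real (j + 1 + Suc n) * (fact (j + 1) * real (j + 1 + Suc n) ^ n)"
    by (intro mult_left_mono power_mono) auto
  also have "\<dots> = fact (j + 1) * real (j + 1 + Suc n) ^ Suc n" by simp
  finally show ?case .
qed

lemma poly_fact_lim:
  assumes q: "0 \<le> q"
  shows "(\<lambda>j. real (j + 1) ^ d * q ^ j / fact j) \<longlonglongrightarrow> 0"
proof (rule summable_LIMSEQ_zero, rule summable_ratio_test[where c = "1/2" and N = "nat \<lceil>2 ^ (d + 1) * q\<rceil>"])
  fix j assume j: "nat \<lceil>2 ^ (d + 1) * q\<rceil> \<le> j"
  then have jq: "2 ^ (d + 1) * q \<le> real j" by linarith
  have a: "real (Suc j + 1) ^ d \<le> 2 ^ d * real (j + 1) ^ d"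
  proof -
    have "real (Suc j + 1) ^ d \<le> (2 * real (j + 1)) ^ d" by (intro power_mono) auto
    then show ?thesis by (simp only: power_mult_distrib)
  qed
  have b: "2 ^ d * q \<le> real (j + 1) / 2" using jq by simp
  have "real (Suc j + 1) ^ d * q ^ Suc j / fact (Suc j)
      = (real (Suc j + 1) ^ d * q) * (q ^ j / fact j) / real (j + 1)"
    by (simp add: fact_Suc field_simps)
  also have "\<dots> \<le> (2 ^ d * real (j + 1) ^ d * q) * (q ^ j / fact j) / real (j + 1)"
    using a q by (intro divide_right_mono mult_right_mono) auto
  also have "\<dots> = (2 ^ d * q) / real (j + 1) * (real (j + 1) ^ d * q ^ j / fact j)"
    by (simp add: field_simps)
  also have "\<dots> \<le> (1/2) * (real (j + 1) ^ d * q ^ j / fact j)"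
    using b q by (intro mult_right_mono) (auto simp: field_simps)
  finally show "norm (real (Suc j + 1) ^ d * q ^ Suc j / fact (Suc j)) \<le> 1/2 * norm (real (j + 1) ^ d * q ^ j / fact j)"
    using q by simp
qed simp


lemma VV_le:
  assumes r: "0 < r"
  shows "VV n n r \<le> 1 / fact n"
proof -
  define R where "R = max 1 r"
  have R1: "1 \<le> R" and rR: "r \<le> R" by (auto simp: R_def)
  define E where "E M = 2 * (fact (Suc M) * (real (Suc n) * R ^ (Suc M + n) / fact (Suc M - n))
      * (real (Suc n) * R ^ (M + n) / fact (M - n)))" for M
  have step: "VV n n r \<le> 1 / fact n + r * E M" if nM: "n \<le> M" for M
  proof -
    obtain z where z: "0 < z" "z < r"
      "SS n M r - SS n M 0 = (r - 0) * (- 2 * exp (- (z ^ 2)) * TT n (Suc M) z)"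
      using MVT2[OF r, of "SS n M" "\<lambda>x. - 2 * exp (- (x ^ 2)) * TT n (Suc M) x"] SS_deriv by blast
    have zR: "z \<le> R" using z rR by simp
    have "\<bar>TT n (Suc M) z\<bar> = fact (Suc M) * (\<bar>PP n (Suc M) z\<bar> * \<bar>PP n M z\<bar>)"
      by (simp add: TT_def abs_mult)
    also have "\<dots> \<le> fact (Suc M) * ((real (Suc n) * R ^ (Suc M + n) / fact (Suc M - n))
        * (real (Suc n) * R ^ (M + n) / fact (M - n)))"
      using nM z zR R1
      by (intro mult_left_mono mult_mono PP_bound) auto
    finally have Tb: "\<bar>TT n (Suc M) z\<bar> \<le> E M / 2" by (simp only: E_def mult.assoc) simp
    have ex: "exp (- (z ^ 2)) \<le> 1" by simp
    have "\<bar>- 2 * exp (- (z ^ 2)) * TT n (Suc M) z\<bar> = 2 * exp (- (z ^ 2)) * \<bar>TT n (Suc M) z\<bar>"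
      by (simp add: abs_mult)
    also have "\<dots> \<le> 2 * 1 * (E M / 2)"
      using Tb ex by (intro mult_mono) auto
    finally have "\<bar>- 2 * exp (- (z ^ 2)) * TT n (Suc M) z\<bar> \<le> E M" by simp
    then have "r * (- 2 * exp (- (z ^ 2)) * TT n (Suc M) z) \<le> r * E M"
      using r by (intro mult_left_mono) auto
    then have "SS n M r \<le> 1 / fact n + r * E M" using z(3) SS_at0[OF nM] by simp
    moreover have "VV n n r \<le> SS n M r"
      unfolding SS_def using nM by (intro member_le_sum) (auto simp: VV_def)
    ultimately show ?thesis by simp
  qed
  define C where "C = 2 * real (Suc n) ^ 2 * R ^ (4 * n + 1) * real (Suc n) ^ n"
  have Elim: "(\<lambda>j. E (j + n)) \<longlonglongrightarrow> 0"
  proof (rule tendsto_sandwich[of "\<lambda>_. 0" _ _ "\<lambda>j. C * (real (j + 1) ^ n * (R ^ 2) ^ j / fact j)"])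
    show "\<forall>\<^sub>F j in sequentially. 0 \<le> E (j + n)"
      using R1 by (auto simp: E_def)
    show "(\<lambda>j. C * (real (j + 1) ^ n * (R ^ 2) ^ j / fact j)) \<longlonglongrightarrow> 0"
      using tendsto_mult_right_zero[OF poly_fact_lim[of "R^2" n]] by simp
    show "\<forall>\<^sub>F j in sequentially. E (j + n) \<le> C * (real (j + 1) ^ n * (R ^ 2) ^ j / fact j)"
    proof (intro always_eventually allI)
      fix j
      have e1: "Suc (j + n) - n = j + 1" "j + n - n = j" by auto
      have pw: "R ^ (Suc (j + n) + n) * R ^ (j + n + n) = R ^ (4 * n + 1) * (R ^ 2) ^ j"
      proof -
        have "Suc (j + n) + n + (j + n + n) = (4 * n + 1) + 2 * j" by simp
        then have "R ^ (Suc (j + n) + n) * R ^ (j + n + n) = R ^ (4 * n + 1) * R ^ (2 * j)"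
          by (simp only: power_add[symmetric])
        then show ?thesis by (simp add: power_mult)
      qed
      have "E (j + n) = 2 * real (Suc n) ^ 2 * (R ^ (Suc (j + n) + n) * R ^ (j + n + n))
           * (fact (j + 1 + n) / fact (j + 1)) / fact j"
        unfolding E_def e1 by (simp add: power2_eq_square field_simps add_ac)
      also have "\<dots> \<le> 2 * real (Suc n) ^ 2 * (R ^ (Suc (j + n) + n) * R ^ (j + n + n))
           * (real (j + 1 + n) ^ n) / fact j"
      proof -
        have "fact (j + 1 + n) / fact (j + 1) \<le> (real (j + 1 + n) ^ n :: real)"
          using fact_shift_le[of j n] by (simp add: divide_le_eq mult.commute)
        then show ?thesis using R1
          by (intro divide_right_mono mult_left_mono) auto
      qed
      also have "\<dots> \<le> 2 * real (Suc n) ^ 2 * (R ^ (Suc (j + n) + n) * R ^ (j + n + n))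
           * (real (Suc n) ^ n * real (j + 1) ^ n) / fact j"
      proof -
        have "real (j + 1 + n) ^ n \<le> (real (Suc n) * real (j + 1)) ^ n"
          by (intro power_mono) (auto simp: algebra_simps)
        then have "real (j + 1 + n) ^ n \<le> real (Suc n) ^ n * real (j + 1) ^ n"
          by (simp add: power_mult_distrib)
        then show ?thesis using R1
          by (intro divide_right_mono mult_left_mono) auto
      qed
      also have "\<dots> = C * (real (j + 1) ^ n * (R ^ 2) ^ j / fact j)"
        unfolding pw C_def by (simp add: field_simps)
      finally show "E (j + n) \<le> C * (real (j + 1) ^ n * (R ^ 2) ^ j / fact j)" .
    qed
  qed simp
  have "(\<lambda>j. 1 / fact n + r * E (j + n)) \<longlonglongrightarrow> 1 / fact n + r * 0"
    by (intro tendsto_intros Elim)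
  then have lim: "(\<lambda>j. 1 / fact n + r * E (j + n)) \<longlonglongrightarrow> 1 / fact n" by simp
  show ?thesis
    by (rule LIMSEQ_le_const[OF lim]) (use step in auto)
qed


lemma lag_at0: "laguerre m b 0 = (real m + b) gchoose m"
proof -
  have "laguerre m b 0 = (\<Sum>k\<le>m. (if k = 0 then (real m + b) gchoose m else 0))"
    unfolding laguerre_def by (intro sum.cong refl) (simp add: power_0_left)
  also have "\<dots> = (real m + b) gchoose m" by simp
  finally show ?thesis .
qed

lemma lag0_at0: "laguerre m 0 0 = 1"
  by (simp add: lag_at0 binomial_gbinomial[symmetric])

lemma lag_PP: "laguerre n 0 (r ^ 2) = fact n * PP n n r"
proof -
  have "laguerre n 0 (r ^ 2) = (\<Sum>k=0..n. ((real n) gchoose (n - k)) * (- (r ^ 2)) ^ k / fact k)"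
    unfolding laguerre_def by (simp add: atLeast0AtMost)
  also have "\<dots> = (\<Sum>k=0..n. ((real n) gchoose (n - (n + 0 - k))) * (- (r ^ 2)) ^ (n + 0 - k) / fact (n + 0 - k))"
    by (rule sum.atLeastAtMost_rev)
  also have "\<dots> = (\<Sum>k=0..n. fact n * (cc n n k * r ^ (n + n - 2 * k)))"
  proof (intro sum.cong refl)
    fix k assume k: "k \<in> {0..n}"
    then have kn: "k \<le> n" by simp
    have g: "(real n gchoose (n - (n + 0 - k))) = fact n / (fact k * fact (n - k))"
      using kn by (simp add: binomial_gbinomial[symmetric] binomial_fact)
    have p: "(- (r ^ 2)) ^ (n - k) = (-1) ^ (n - k) * r ^ (n + n - 2 * k)"
    proof -
      have "n + n - 2 * k = 2 * (n - k)" using kn by simp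
      then show ?thesis by (simp add: power_mult power_mult_distrib[symmetric])
    qed
    show "(real n gchoose (n - (n + 0 - k))) * (- (r ^ 2)) ^ (n + 0 - k) / fact (n + 0 - k) =
        fact n * (cc n n k * r ^ (n + n - 2 * k))"
      unfolding g using kn p by (simp add: cc_def field_simps)
  qed
  also have "\<dots> = fact n * PP n n r"
    by (simp add: PP_def sum_distrib_left atLeast0AtMost)
  finally show ?thesis .
qed

lemma lag0_bound:
  assumes "0 \<le> x" shows "\<bar>exp (- x / 2) * laguerre n 0 x\<bar> \<le> 1"
proof (cases "x = 0")
  case True then show ?thesis by (simp add: lag_at0 binomial_gbinomial[symmetric])
next
  case False
  define r where "r = sqrt x"
  have r: "0 < r" using assms False by (simp add: r_def)
  have x: "x = r ^ 2" using assms by (simp add: r_def)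
  have "VV n n r \<le> 1 / fact n" by (rule VV_le[OF r])
  then have "exp (- (r ^ 2)) * fact n * (PP n n r)\<^sup>2 * fact n \<le> 1 / fact n * fact n"
    unfolding VV_def by (intro mult_right_mono) auto
  then have "exp (- (r ^ 2)) * (fact n * PP n n r)\<^sup>2 \<le> 1"
    by (simp add: power2_eq_square algebra_simps)
  moreover have "(exp (- x / 2) * laguerre n 0 x)\<^sup>2 = exp (- (r ^ 2)) * (fact n * PP n n r)\<^sup>2"
  proof -
    have "(exp (- x / 2))\<^sup>2 = exp (- x)"
      by (simp add: power2_eq_square exp_add[symmetric])
    then show ?thesis using x lag_PP[of n r] by (simp add: power_mult_distrib)
  qed
  ultimately have "(exp (- x / 2) * laguerre n 0 x)\<^sup>2 \<le> 1" by simp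
  then show ?thesis by (simp only: abs_square_le_1)
qed

lemma lag_bound:
  assumes b: "0 \<le> b" and x: "0 \<le> x"
  shows "\<bar>exp (- x / 2) * laguerre n b x\<bar> \<le> laguerre n b 0"
proof -
  have w: "0 \<le> ((real j + b - 1) gchoose j)" for j
  proof -
    have "((real j + b - 1) gchoose j) = pochhammer (real j + b - 1 - real j + 1) j / fact j"
      by (rule gbinomial_pochhammer')
    also have "real j + b - 1 - real j + 1 = b" by simp
    moreover have "0 \<le> pochhammer b j"
    proof (cases "b = 0")
      case True then show ?thesis by (simp add: pochhammer_0_left)
    next
      case False then show ?thesis using b pochhammer_nonneg[of b j] by simp
    qed
    ultimately show ?thesis by simp
  qed
  have "\<bar>exp (- x / 2) * laguerre n b x\<bar> =
      \<bar>\<Sum>j\<le>n. ((real j + b - 1) gchoose j) * (exp (- x / 2) * laguerre (n - j) 0 x)\<bar>"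
    by (subst lag_conn) (simp add: sum_distrib_left algebra_simps)
  also have "\<dots> \<le> (\<Sum>j\<le>n. \<bar>((real j + b - 1) gchoose j) * (exp (- x / 2) * laguerre (n - j) 0 x)\<bar>)"
    by (rule sum_abs)
  also have "\<dots> \<le> (\<Sum>j\<le>n. ((real j + b - 1) gchoose j) * 1)"
  proof (intro sum_mono)
    fix j assume "j \<in> {..n}"
    have "\<bar>((real j + b - 1) gchoose j) * (exp (- x / 2) * laguerre (n - j) 0 x)\<bar>
        = ((real j + b - 1) gchoose j) * \<bar>exp (- x / 2) * laguerre (n - j) 0 x\<bar>"
      using w[of j] by (simp only: abs_mult abs_of_nonneg)
    also have "\<dots> \<le> ((real j + b - 1) gchoose j) * 1"
      using w[of j] lag0_bound[OF x, of "n - j"] by (intro mult_left_mono) auto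
    finally show "\<bar>((real j + b - 1) gchoose j) * (exp (- x / 2) * laguerre (n - j) 0 x)\<bar>
        \<le> ((real j + b - 1) gchoose j) * 1" .
  qed
  also have "\<dots> = (\<Sum>j\<le>n. ((real j + b - 1) gchoose j) * laguerre (n - j) 0 0)"
    by (simp only: lag0_at0)
  also have "\<dots> = laguerre n b 0" by (rule lag_conn[symmetric])
  finally show ?thesis .
qed


lemma lag_0n: "laguerre 0 b x = 1" by (simp add: laguerre_def)

lemma xD: "x * laguerre_pred n (a + 2) x = (a + 1) * laguerre n (a + 1) x - (real n + a + 1) * laguerre n a x"
proof (cases n)
  case 0 then show ?thesis by (simp add: laguerre_pred_def lag_0n)
next
  case (Suc m)
  have r2: "x * laguerre m (a + 1 + 1) x = (real m + (a + 1) + 1) * laguerre m (a + 1) x - (real m + 1) * laguerre (Suc m) (a + 1) x"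
    by (rule lag_R2)
  have e: "a + 1 + 1 = a + 2" by simp
  have r1: "laguerre (Suc m) a x = laguerre (Suc m) (a + 1) x - laguerre m (a + 1) x" by (rule lag_R1)
  have lp: "laguerre_pred (Suc m) (a + 2) x = laguerre m (a + 2) x" by (simp add: laguerre_pred_def)
  show ?thesis unfolding Suc lp r1 using r2 unfolding e by (simp add: algebra_simps)
qed

lemma div_helper: "(c::real) \<noteq> 0 \<Longrightarrow> e * c = N \<Longrightarrow> e = N / c"
  by (simp add: eq_divide_eq)

lemma z_ident:
  assumes x: "0 \<le> x" and a: "1 \<le> a"
  shows "zfun a n x = exp (- x / 2) * (((real n + a + 1) * (x + a - 1) * laguerre n a x
     + (real n + 1) * laguerre (Suc n) a x) / (x + a))"
proof -
  define A where "A = laguerre n a x"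
  define B where "B = laguerre n (a + 1) x"
  define C where "C = laguerre (Suc n) a x"
  define D where "D = laguerre_pred n (a + 2) x"
  have hD: "x * D = (a + 1) * B - (real n + a + 1) * A" unfolding A_def B_def D_def by (rule xD)
  have hB: "x * B = (real n + a + 1) * A - (real n + 1) * C"
    unfolding A_def B_def C_def using lag_R2[of x n a] by (simp add: algebra_simps)
  have pos: "x + a \<noteq> 0" using x a by simp
  have "(- x * D + a * (1 + 1 / (x + a)) * B) * (x + a) = - (x + a) * (x * D) + a * (x * B) + a * (a + 1) * B"
    using pos by (simp add: field_simps)
  also have "\<dots> = - (x + a) * ((a + 1) * B - (real n + a + 1) * A) + a * (x * B) + a * (a + 1) * B"
    unfolding hD ..
  also have "\<dots> = - (x * B) + (x + a) * (real n + a + 1) * A"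
    by (simp add: algebra_simps)
  also have "\<dots> = (real n + a + 1) * (x + a - 1) * A + (real n + 1) * C"
    unfolding hB by (simp add: algebra_simps)
  finally have key: "(- x * D + a * (1 + 1 / (x + a)) * B) = ((real n + a + 1) * (x + a - 1) * A + (real n + 1) * C) / (x + a)"
    by (rule div_helper[OF pos])
  show ?thesis unfolding zfun_def key[unfolded A_def B_def C_def D_def] ..
qed

lemma z_bound:
  assumes x: "0 \<le> x" and a: "1 \<le> a"
  shows "\<bar>zfun a n x\<bar> \<le> zfun a n 0"
proof -
  define K where "K = real n + a + 1"
  define A0 where "A0 = laguerre n a 0"
  define C0 where "C0 = laguerre (Suc n) a 0"
  have K: "0 < K" using a by (simp add: K_def)
  have C0: "(real n + 1) * C0 = K * A0"
  proof -
    have "of_nat (Suc n) * ((real (Suc n) + a) gchoose Suc n) = (real (Suc n) + a) * ((real (Suc n) + a - 1) gchoose n)"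
      by (rule gbinomial_absorption)
    then show ?thesis by (simp add: C0_def A0_def K_def lag_at0 algebra_simps)
  qed
  have eA: "\<bar>exp (- x / 2) * laguerre n a x\<bar> \<le> A0" unfolding A0_def using a x by (intro lag_bound) auto
  have eC: "\<bar>exp (- x / 2) * laguerre (Suc n) a x\<bar> \<le> C0" unfolding C0_def using a x by (intro lag_bound) auto
  have xa: "0 < x + a" "0 \<le> x + a - 1" using a x by auto
  have z0: "zfun a n 0 = K * A0"
  proof -
    have "zfun a n 0 = (K * (a - 1) * A0 + K * A0) / a"
      using z_ident[of 0 a n] a C0 by (simp add: K_def A0_def C0_def)
    also have "\<dots> = K * A0" using a by (simp add: field_simps)
    finally show ?thesis .
  qed
  have "\<bar>zfun a n x\<bar> = \<bar>K * (x + a - 1) * (exp (- x / 2) * laguerre n a x)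
       + (real n + 1) * (exp (- x / 2) * laguerre (Suc n) a x)\<bar> / (x + a)"
    unfolding z_ident[OF x a] using xa by (simp add: K_def abs_mult abs_divide algebra_simps)
  also have "\<dots> \<le> (K * (x + a - 1) * A0 + (real n + 1) * C0) / (x + a)"
  proof (intro divide_right_mono)
    have "\<bar>K * (x + a - 1) * (exp (- x / 2) * laguerre n a x) + (real n + 1) * (exp (- x / 2) * laguerre (Suc n) a x)\<bar>
        \<le> \<bar>K * (x + a - 1) * (exp (- x / 2) * laguerre n a x)\<bar> + \<bar>(real n + 1) * (exp (- x / 2) * laguerre (Suc n) a x)\<bar>"
      by (rule abs_triangle_ineq)
    also have "\<dots> = K * (x + a - 1) * \<bar>exp (- x / 2) * laguerre n a x\<bar> + (real n + 1) * \<bar>exp (- x / 2) * laguerre (Suc n) a x\<bar>"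
      using K xa by (simp add: abs_mult)
    also have "\<dots> \<le> K * (x + a - 1) * A0 + (real n + 1) * C0"
      using K xa eA eC by (intro add_mono mult_left_mono) auto
    finally show "\<bar>K * (x + a - 1) * (exp (- x / 2) * laguerre n a x) + (real n + 1) * (exp (- x / 2) * laguerre (Suc n) a x)\<bar>
        \<le> K * (x + a - 1) * A0 + (real n + 1) * C0" .
  qed (use xa in auto)
  also have "\<dots> = K * A0" using C0 xa by (simp add: field_simps)
  finally show ?thesis using z0 by simp
qed

theorem lemma4:
  fixes \<alpha> :: real and n :: nat and c :: real
  assumes "\<alpha> \<ge> 1"
    and "c * zfun \<alpha> n 0 = 1"
  shows "(\<forall>x\<ge>0. \<bar>c * zfun \<alpha> n x\<bar> \<le> 1)
      \<and> (SUP x\<in>{0..}. \<bar>c * zfun \<alpha> n x\<bar>) = 1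
      \<and> c * zfun \<alpha> n 0 = 1"
proof -
  have z00: "0 \<le> zfun \<alpha> n 0" using z_bound[of 0 \<alpha> n] assms(1) by simp
  have bnd: "\<bar>c * zfun \<alpha> n x\<bar> \<le> 1" if "x \<ge> 0" for x
  proof -
    have "\<bar>c * zfun \<alpha> n x\<bar> = \<bar>c\<bar> * \<bar>zfun \<alpha> n x\<bar>" by (rule abs_mult)
    also have "\<dots> \<le> \<bar>c\<bar> * zfun \<alpha> n 0" using z_bound[OF that assms(1)] by (intro mult_left_mono) auto
    also have "\<dots> = \<bar>c * zfun \<alpha> n 0\<bar>" using z00 by (simp add: abs_mult)
    finally show ?thesis using assms(2) by simp
  qed
  have "(SUP x\<in>{0..}. \<bar>c * zfun \<alpha> n x\<bar>) = 1"
    unfolding image_def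
    by (rule cSup_eq_maximum) (use assms(2) bnd in force)+
  then show ?thesis using bnd assms(2) by blast
qed

end
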